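(* Let $S=(|S|,\preccurlyeq,E)$, where $|S|$ is a finite set, $\preccurlyeq$ is a partial ordering on $|S|$, and $E$ is a set of unordered pairs of distinct elements of $|S|$. Let $c$ be the number of connected components of the Hasse diagram of the poset $(|S|,\preccurlyeq)$. For each integer $n\ge 0$ let $C(S,n)$ be the number of maps $\varphi:|S|\to\{1,\dots,n\}$ that are isotone (i.e. $x\preccurlyeq y\Rightarrow \varphi(x)\le\varphi(y)$) and satisfy $\varphi(x)\neq\varphi(y)$ whenever $\{x,y\}\in E$. Then there is a polynomial $f\in\mathbb{Q}[t]$ with $C(S,n)=f(n)$ for all integers $n\ge 0$, and every prime dividing the denominator of a coefficient of $f$ (written in lowest terms) is $\le \mathrm{card}(|S|)-c+1$.
   Context: The Hasse diagram of a finite poset is the graph on its elements in which $x,y$ are adjacent iff one covers the other ($y$ covers $x$ means $x\preccurlyeq y$, $x\ne y$, and there is no $z$ distinct from both with $x\preccurlyeq z\preccurlyeq y$). *)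

theory Defs
  imports Main "HOL-Library.FuncSet" "HOL-Computational_Algebra.Polynomial"
    "HOL-Computational_Algebra.Primes"
begin

definition covers :: "'a set \<Rightarrow> ('a \<times> 'a) set \<Rightarrow> 'a \<Rightarrow> 'a \<Rightarrow> bool" where
  "covers S r x y \<longleftrightarrow> x \<in> S \<and> y \<in> S \<and> (x, y) \<in> r \<and> x \<noteq> y \<and>
     \<not> (\<exists>z\<in>S. z \<noteq> x \<and> z \<noteq> y \<and> (x, z) \<in> r \<and> (z, y) \<in> r)"

definition hasse_edges :: "'a set \<Rightarrow> ('a \<times> 'a) set \<Rightarrow> ('a \<times> 'a) set" where
  "hasse_edges S r = {(x, y). covers S r x y \<or> covers S r y x}"

definition hasse_components :: "'a set \<Rightarrow> ('a \<times> 'a) set \<Rightarrow> nat" where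
  "hasse_components S r = card (S // ((hasse_edges S r)\<^sup>*))"

definition colorings :: "'a set \<Rightarrow> ('a \<times> 'a) set \<Rightarrow> 'a set set \<Rightarrow> nat \<Rightarrow> nat" where
  "colorings S r E n = card {\<phi> \<in> S \<rightarrow>\<^sub>E {1..n}.
      (\<forall>x\<in>S. \<forall>y\<in>S. (x, y) \<in> r \<longrightarrow> \<phi> x \<le> \<phi> y) \<and>
      (\<forall>x y. {x, y} \<in> E \<longrightarrow> \<phi> x \<noteq> \<phi> y)}"

end

theory Submission
  imports Defs
begin


definition good :: "nat \<Rightarrow> rat \<Rightarrow> bool" where
  "good B q \<longleftrightarrow> (\<exists>k::nat. \<exists>z::int. q * of_nat (fact B ^ k) = of_int z)"

definition goodp :: "nat \<Rightarrow> rat poly \<Rightarrow> bool" where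
  "goodp B f \<longleftrightarrow> (\<forall>i. good B (coeff f i))"

lemma good_int: "good B (of_int z)"
  unfolding good_def by (rule exI[of _ 0]) auto

lemma good_nat: "good B (of_nat z)"
  using good_int[of B "int z"] by simp

lemma good_add: assumes "good B a" "good B b" shows "good B (a + b)"
proof -
  from assms obtain k1 z1 k2 z2 where h1: "a * of_nat (fact B ^ k1) = of_int z1"
    and h2: "b * of_nat (fact B ^ k2) = of_int z2" unfolding good_def by blast
  have "(a + b) * of_nat (fact B ^ (k1 + k2)) = of_int (z1 * fact B ^ k2 + z2 * fact B ^ k1)"
    using h1 h2 by (simp add: power_add algebra_simps flip: h1 h2)
  then show ?thesis unfolding good_def by blast
qed

lemma good_mult: assumes "good B a" "good B b" shows "good B (a * b)"
proof -
  from assms obtain k1 z1 k2 z2 where h1: "a * of_nat (fact B ^ k1) = of_int z1"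
    and h2: "b * of_nat (fact B ^ k2) = of_int z2" unfolding good_def by blast
  have "(a * b) * of_nat (fact B ^ (k1 + k2)) = of_int (z1 * z2)"
    by (simp add: power_add algebra_simps flip: h1 h2)
  then show ?thesis unfolding good_def by blast
qed

lemma good_uminus: assumes "good B a" shows "good B (- a)"
  using good_mult[OF good_int[of B "-1"] assms] by simp

lemma good_diff: assumes "good B a" "good B b" shows "good B (a - b)"
  using good_add[OF assms(1) good_uminus[OF assms(2)]] by simp

lemma good_sum: "(\<And>i. i \<in> A \<Longrightarrow> good B (f i)) \<Longrightarrow> good B (\<Sum>i\<in>A. f i)"
  by (induction A rule: infinite_finite_induct) (auto intro: good_add good_int[of B 0, simplified])

lemma good_inv_fact: assumes "k \<le> B" shows "good B (1 / of_nat (fact k))"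
proof -
  have "fact k dvd (fact B :: nat)" using assms by (rule fact_dvd)
  then obtain m where m: "fact B = fact k * (m::nat)" by blast
  have "(1 / of_nat (fact k)) * of_nat (fact B ^ 1) = (of_int (int m) :: rat)"
    by (simp add: m)
  then show ?thesis unfolding good_def by blast
qed

lemma goodp_add: "goodp B f \<Longrightarrow> goodp B g \<Longrightarrow> goodp B (f + g)"
  unfolding goodp_def by (auto intro: good_add)

lemma goodp_diff: "goodp B f \<Longrightarrow> goodp B g \<Longrightarrow> goodp B (f - g)"
  unfolding goodp_def by (auto intro: good_diff)

lemma goodp_mult: "goodp B f \<Longrightarrow> goodp B g \<Longrightarrow> goodp B (f * g)"
  unfolding goodp_def coeff_mult by (auto intro!: good_sum good_mult)

lemma goodp_smult: "good B c \<Longrightarrow> goodp B f \<Longrightarrow> goodp B (smult c f)"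
  unfolding goodp_def by (auto intro: good_mult)

lemma goodp_const: "good B c \<Longrightarrow> goodp B [:c:]"
  unfolding goodp_def by (auto simp: coeff_pCons split: nat.split intro: good_int[of B 0, simplified])

lemma goodp_sum: "(\<And>i. i \<in> A \<Longrightarrow> goodp B (f i)) \<Longrightarrow> goodp B (\<Sum>i\<in>A. f i)"
  by (induction A rule: infinite_finite_induct) (auto intro!: good_add simp: goodp_def good_int[of B 0, simplified])

lemma goodp_prod: "(\<And>i. i \<in> A \<Longrightarrow> goodp B (f i)) \<Longrightarrow> goodp B (\<Prod>i\<in>A. f i)"
proof (induction A rule: infinite_finite_induct)
  case (infinite A) then show ?case using goodp_const[OF good_int[of B 1]] by (simp add: one_pCons)
next
  case empty then show ?case using goodp_const[OF good_int[of B 1]] by (simp add: one_pCons)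
next
  case (insert x F) then show ?case by (auto intro: goodp_mult)
qed

lemma goodp_lin: "goodp B [:- of_nat i, 1:]"
  unfolding goodp_def by (auto simp: coeff_pCons split: nat.split intro: good_int[of B 0, simplified] good_uminus good_nat good_int[of B 1, simplified])

definition bp :: "nat \<Rightarrow> rat poly" where
  "bp k = smult (1 / of_nat (fact k)) (\<Prod>i\<in>{0..<k}. [:- of_nat i, 1:])"

lemma goodp_bp: "k \<le> B \<Longrightarrow> goodp B (bp k)"
  unfolding bp_def by (intro goodp_smult good_inv_fact goodp_prod goodp_lin)

lemma poly_bp: "poly (bp k) (of_nat n) = of_nat (n choose k)"
  unfolding bp_def binomial_gbinomial gbinomial_prod_rev
  by (simp add: poly_prod divide_inverse mult.commute)

lemma good_denom:
  assumes "good B q" "prime p" "int p dvd snd (quotient_of q)"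
  shows "p \<le> B"
proof -
  obtain a b where qb: "quotient_of q = (a, b)" by (cases "quotient_of q")
  have bpos: "b > 0" using qb quotient_of_denom_pos by blast
  have cop: "coprime a b" using qb quotient_of_coprime by blast
  have qeq: "q = of_int a / of_int b" using qb quotient_of_div by blast
  from assms(1) obtain k z where hz: "q * of_nat (fact B ^ k) = of_int z" unfolding good_def by blast
  have "of_int a * of_nat (fact B ^ k) = (of_int (z * b) :: rat)"
    using hz bpos by (simp add: qeq field_simps)
  then have "a * int (fact B ^ k) = z * b" by (metis of_int_eq_iff of_int_mult of_int_of_nat_eq)
  then have "b dvd a * int (fact B ^ k)" by simp
  then have "b dvd int (fact B ^ k)" using cop by (metis coprime_commute coprime_dvd_mult_right_iff)
  moreover have "int p dvd b" using assms(3) qb by simp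
  ultimately have "int p dvd int (fact B ^ k)" by (meson dvd_trans)
  then have "p dvd fact B ^ k" by (simp only: int_dvd_int_iff)
  then have "p dvd fact B" using assms(2) prime_dvd_power by blast
  then show ?thesis using assms(2) prime_dvd_fact_iff by blast
qed




lemma transport_card:
  assumes bij: "bij_betw h X Y" and mono: "\<forall>a\<in>X. \<forall>b\<in>X. h a \<le> h b \<longleftrightarrow> a \<le> b"
    and inv: "\<And>\<phi> \<psi>. (\<forall>x\<in>T. \<forall>y\<in>T. \<phi> x \<le> \<phi> y \<longleftrightarrow> \<psi> x \<le> \<psi> y) \<Longrightarrow> P \<phi> = P \<psi>"
  shows "card {\<phi> \<in> T \<rightarrow>\<^sub>E X. P \<phi> \<and> \<phi> ` T = X} = card {\<phi> \<in> T \<rightarrow>\<^sub>E (Y::nat set). P \<phi> \<and> \<phi> ` T = Y}"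
proof -
  define g where "g = inv_into X h"
  have bijg: "bij_betw g Y X" unfolding g_def by (rule bij_betw_inv_into[OF bij])
  have hg: "\<And>y. y \<in> Y \<Longrightarrow> h (g y) = y" unfolding g_def using bij by (meson bij_betw_inv_into_right)
  have gh: "\<And>x. x \<in> X \<Longrightarrow> g (h x) = x" unfolding g_def using bij by (meson bij_betw_inv_into_left)
  have monog: "\<forall>a\<in>Y. \<forall>b\<in>Y. g a \<le> g b \<longleftrightarrow> a \<le> b"
    using mono hg bijg by (metis bij_betwE)
  have hX: "h ` X = Y" using bij by (simp add: bij_betw_def)
  have gY: "g ` Y = X" using bijg by (simp add: bij_betw_def)
  have "bij_betw (\<lambda>\<phi>. restrict (h \<circ> \<phi>) T) {\<phi> \<in> T \<rightarrow>\<^sub>E X. P \<phi> \<and> \<phi> ` T = X} {\<phi> \<in> T \<rightarrow>\<^sub>E Y. P \<phi> \<and> \<phi> ` T = Y}"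
  proof (rule bij_betw_byWitness[where f'="\<lambda>\<phi>. restrict (g \<circ> \<phi>) T"])
    show "\<forall>a\<in>{\<phi> \<in> T \<rightarrow>\<^sub>E X. P \<phi> \<and> \<phi> ` T = X}. restrict (g \<circ> restrict (h \<circ> a) T) T = a"
      using gh by (auto simp: restrict_def PiE_def extensional_def fun_eq_iff Pi_def)
    show "\<forall>a\<in>{\<phi> \<in> T \<rightarrow>\<^sub>E Y. P \<phi> \<and> \<phi> ` T = Y}. restrict (h \<circ> restrict (g \<circ> a) T) T = a"
      using hg by (auto simp: restrict_def PiE_def extensional_def fun_eq_iff Pi_def)
    show "(\<lambda>\<phi>. restrict (h \<circ> \<phi>) T) ` {\<phi> \<in> T \<rightarrow>\<^sub>E X. P \<phi> \<and> \<phi> ` T = X} \<subseteq> {\<phi> \<in> T \<rightarrow>\<^sub>E Y. P \<phi> \<and> \<phi> ` T = Y}"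
    proof (rule image_subsetI)
      fix \<phi> assume "\<phi> \<in> {\<phi> \<in> T \<rightarrow>\<^sub>E X. P \<phi> \<and> \<phi> ` T = X}"
      then have p: "\<phi> \<in> T \<rightarrow>\<^sub>E X" "P \<phi>" "\<phi> ` T = X" by auto
      have 1: "restrict (h \<circ> \<phi>) T \<in> T \<rightarrow>\<^sub>E Y" using p hX by auto
      have "P (restrict (h \<circ> \<phi>) T) = P \<phi>" by (rule inv) (use p mono in auto)
      then have 2: "P (restrict (h \<circ> \<phi>) T)" using p by simp
      have 3: "restrict (h \<circ> \<phi>) T ` T = Y" using p hX image_image[of h \<phi> T] by simp
      show "restrict (h \<circ> \<phi>) T \<in> {\<phi> \<in> T \<rightarrow>\<^sub>E Y. P \<phi> \<and> \<phi> ` T = Y}" using 1 2 3 by blast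
    qed
    show "(\<lambda>\<phi>. restrict (g \<circ> \<phi>) T) ` {\<phi> \<in> T \<rightarrow>\<^sub>E Y. P \<phi> \<and> \<phi> ` T = Y} \<subseteq> {\<phi> \<in> T \<rightarrow>\<^sub>E X. P \<phi> \<and> \<phi> ` T = X}"
    proof (rule image_subsetI)
      fix \<phi> assume "\<phi> \<in> {\<phi> \<in> T \<rightarrow>\<^sub>E Y. P \<phi> \<and> \<phi> ` T = Y}"
      then have p: "\<phi> \<in> T \<rightarrow>\<^sub>E Y" "P \<phi>" "\<phi> ` T = Y" by auto
      have 1: "restrict (g \<circ> \<phi>) T \<in> T \<rightarrow>\<^sub>E X" using p gY by auto
      have "P (restrict (g \<circ> \<phi>) T) = P \<phi>" by (rule inv) (use p monog in auto)
      then have 2: "P (restrict (g \<circ> \<phi>) T)" using p by simp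
      have 3: "restrict (g \<circ> \<phi>) T ` T = X" using p gY image_image[of g \<phi> T] by simp
      show "restrict (g \<circ> \<phi>) T \<in> {\<phi> \<in> T \<rightarrow>\<^sub>E X. P \<phi> \<and> \<phi> ` T = X}" using 1 2 3 by blast
    qed
  qed
  then show ?thesis by (rule bij_betw_same_card)
qed

lemma enum_set:
  fixes A :: "nat set" assumes "finite A"
  shows "\<exists>h. bij_betw h {0..<card A} A \<and> (\<forall>a\<in>{0..<card A}. \<forall>b\<in>{0..<card A}. h a \<le> h b \<longleftrightarrow> a \<le> b)"
proof -
  define xs where "xs = sorted_list_of_set A"
  have d: "distinct xs" and s: "set xs = A" and l: "length xs = card A"
    using assms by (auto simp: xs_def)
  have sw: "sorted_wrt (<) xs" unfolding xs_def by simp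
  have "bij_betw ((!) xs) {0..<card A} A" by (rule bij_betw_nth) (use d s l in auto)
  moreover have "\<forall>a\<in>{0..<card A}. \<forall>b\<in>{0..<card A}. xs ! a \<le> xs ! b \<longleftrightarrow> a \<le> b"
  proof (intro ballI)
    fix a b assume ab: "a \<in> {0..<card A}" "b \<in> {0..<card A}"
    show "xs ! a \<le> xs ! b \<longleftrightarrow> a \<le> b"
      using sorted_wrt_nth_less[OF sw, of a b] sorted_wrt_nth_less[OF sw, of b a] ab l
      by (metis atLeastLessThan_iff le_less not_less)
  qed
  ultimately show ?thesis by blast
qed

lemma block_poly:
  fixes P :: "('a \<Rightarrow> nat) \<Rightarrow> bool"
  assumes fin: "finite T"
    and inv: "\<And>\<phi> \<psi>. (\<forall>x\<in>T. \<forall>y\<in>T. \<phi> x \<le> \<phi> y \<longleftrightarrow> \<psi> x \<le> \<psi> y) \<Longrightarrow> P \<phi> = P \<psi>"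
    and bnd: "\<And>\<phi>. P \<phi> \<Longrightarrow> card (\<phi> ` T) \<le> B"
  shows "\<exists>f. goodp B f \<and> (\<forall>n. poly f (of_nat n) = of_nat (card {\<phi> \<in> T \<rightarrow>\<^sub>E {1..n}. P \<phi>}))"
proof -
  define M where "M A = {\<phi> \<in> T \<rightarrow>\<^sub>E A. P \<phi> \<and> \<phi> ` T = A}" for A
  define m where "m k = card (M {0..<k})" for k
  have finM: "finite (M A)" if "finite A" for A
    unfolding M_def using fin that by (auto intro: finite_PiE finite_subset[OF _ finite_PiE[of T "\<lambda>_. A"]])
  have cardM: "card (M A) = m (card A)" if finA: "finite A" for A
  proof -
    obtain h where h: "bij_betw h {0..<card A} A" "\<forall>a\<in>{0..<card A}. \<forall>b\<in>{0..<card A}. h a \<le> h b \<longleftrightarrow> a \<le> b"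
      using enum_set[OF finA] by blast
    show ?thesis unfolding m_def M_def using transport_card[of h _ _ T P, OF h(1) h(2) inv] by simp
  qed
  have m0: "m k = 0" if "k > B" for k
  proof -
    have "M {0..<k} = {}" using bnd that unfolding M_def by fastforce
    then show ?thesis by (simp add: m_def)
  qed
  have count: "card {\<phi> \<in> T \<rightarrow>\<^sub>E {1..n}. P \<phi>} = (\<Sum>k\<le>B. m k * (n choose k))" for n
  proof -
    have eq: "{\<phi> \<in> T \<rightarrow>\<^sub>E {1..n}. P \<phi>} = (\<Union>A\<in>Pow {1..n}. M A)"
    proof (rule set_eqI, rule iffI)
      fix \<phi> assume "\<phi> \<in> {\<phi> \<in> T \<rightarrow>\<^sub>E {1..n}. P \<phi>}"
      then show "\<phi> \<in> (\<Union>A\<in>Pow {1..n}. M A)"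
        by (intro UN_I[of "\<phi> ` T"]) (auto simp: M_def)
    next
      fix \<phi> assume "\<phi> \<in> (\<Union>A\<in>Pow {1..n}. M A)"
      then obtain A where "A \<subseteq> {1..n}" "\<phi> \<in> M A" by auto
      then show "\<phi> \<in> {\<phi> \<in> T \<rightarrow>\<^sub>E {1..n}. P \<phi>}" by (auto simp: M_def)
    qed
    have "card {\<phi> \<in> T \<rightarrow>\<^sub>E {1..n}. P \<phi>} = (\<Sum>A\<in>Pow {1..n}. card (M A))"
      unfolding eq
      proof (rule card_UN_disjoint)
        show "\<forall>A\<in>Pow {1..n}. finite (M A)" using finM finite_subset[of _ "{1..n}"] by auto
      qed (auto simp: M_def)
    also have "\<dots> = (\<Sum>A\<in>Pow {1..n}. m (card A))"
      by (rule sum.cong) (auto intro!: cardM dest: finite_subset)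
    also have "\<dots> = (\<Sum>A\<in>Pow {1..n}. \<Sum>k\<le>n. if card A = k then m k else 0)"
    proof (rule sum.cong)
      fix A assume "A \<in> Pow {1..n}"
      then have "card A \<le> n" using card_mono[of "{1..n}" A] by auto
      then show "m (card A) = (\<Sum>k\<le>n. if card A = k then m k else 0)"
        by (simp add: sum.delta')
    qed simp
    also have "\<dots> = (\<Sum>k\<le>n. \<Sum>A\<in>Pow {1..n}. if card A = k then m k else 0)"
      by (rule sum.swap)
    also have "\<dots> = (\<Sum>k\<le>n. m k * (n choose k))"
    proof (rule sum.cong)
      fix k
      have "(\<Sum>A\<in>Pow {1..n}. if card A = k then m k else 0) = (\<Sum>A\<in>{A \<in> Pow {1..n}. card A = k}. m k)"
        by (simp add: sum.If_cases Int_def)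
      also have "\<dots> = m k * card {A. A \<subseteq> {1..n} \<and> card A = k}"
        by (simp add: Pow_def conj_commute)
      also have "\<dots> = m k * (n choose k)" by (simp add: n_subsets)
      finally show "(\<Sum>A\<in>Pow {1..n}. if card A = k then m k else 0) = m k * (n choose k)" .
    qed simp
    also have "\<dots> = (\<Sum>k\<le>max n B. m k * (n choose k))"
      by (rule sum.mono_neutral_left) auto
    also have "\<dots> = (\<Sum>k\<le>B. m k * (n choose k))"
      by (rule sum.mono_neutral_right) (auto simp: m0 binomial_eq_0)
    finally show ?thesis .
  qed
  define f where "f = (\<Sum>k\<le>B. smult (of_nat (m k)) (bp k))"
  have "goodp B f" unfolding f_def by (auto intro!: goodp_sum goodp_smult good_nat goodp_bp)
  moreover have "poly f (of_nat n) = of_nat (card {\<phi> \<in> T \<rightarrow>\<^sub>E {1..n}. P \<phi>})" for n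
    unfolding count f_def by (simp add: poly_sum poly_bp)
  ultimately show ?thesis by blast
qed




lemma r_in_hasse:
  assumes fin: "finite S" and po: "partial_order_on S r"
  shows "(x, y) \<in> r \<Longrightarrow> (x, y) \<in> (hasse_edges S r)\<^sup>*"
proof (induction "card {z\<in>S. (x, z) \<in> r \<and> (z, y) \<in> r}" arbitrary: x y rule: less_induct)
  case (less x y)
  have rS: "r \<subseteq> S \<times> S" and tr: "trans r" and an: "antisym r"
    using po by (auto simp: partial_order_on_def preorder_on_def)
  have xS: "x \<in> S" "y \<in> S" using less.prems rS by auto
  have rf: "refl_on S r" using po by (auto simp: partial_order_on_def preorder_on_def)
  show ?case
  proof (cases "x = y")
    case True then show ?thesis by simp
  next
    case False
    show ?thesis
    proof (cases "covers S r x y")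
      case True
      then have "(x, y) \<in> hasse_edges S r" by (simp add: hasse_edges_def)
      then show ?thesis by simp
    next
      case nc: False
      then obtain z where z: "z \<in> S" "z \<noteq> x" "z \<noteq> y" "(x, z) \<in> r" "(z, y) \<in> r"
        using xS False less.prems unfolding covers_def by blast
      define I where "I a b = {w\<in>S. (a, w) \<in> r \<and> (w, b) \<in> r}" for a b
      have finI: "finite (I a b)" for a b unfolding I_def using fin by simp
      have "I x z \<subset> I x y"
      proof
        show "I x z \<subseteq> I x y" unfolding I_def using tr z by (auto dest: transD)
        have "y \<notin> I x z" unfolding I_def using an z by (auto dest: antisymD)
        moreover have "y \<in> I x y" unfolding I_def using less.prems xS z tr rf by (auto dest: transD refl_onD)
        ultimately show "I x z \<noteq> I x y" by blast
      qed
      then have 1: "(x, z) \<in> (hasse_edges S r)\<^sup>*"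
        using less.hyps[of x z] z finI psubset_card_mono unfolding I_def by blast
      have "I z y \<subset> I x y"
      proof
        show "I z y \<subseteq> I x y" unfolding I_def using tr z by (auto dest: transD)
        have "x \<notin> I z y" unfolding I_def using an z by (auto dest: antisymD)
        moreover have "x \<in> I x y" unfolding I_def using less.prems xS z tr rf by (auto dest: transD refl_onD)
        ultimately show "I z y \<noteq> I x y" by blast
      qed
      then have 2: "(z, y) \<in> (hasse_edges S r)\<^sup>*"
        using less.hyps[of z y] z finI psubset_card_mono unfolding I_def by blast
      from 1 2 show ?thesis by simp
    qed
  qed
qed

definition Cr :: "('a \<times> 'a) set \<Rightarrow> ('a \<times> 'a) set \<Rightarrow> ('a \<times> 'a) set" where
  "Cr r Q = r \<union> r\<inverse> \<union> Q \<union> Q\<inverse>"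

definition blk :: "('a \<times> 'a) set \<Rightarrow> ('a \<times> 'a) set \<Rightarrow> 'a \<Rightarrow> 'a set" where
  "blk r Q x = (Cr r Q)\<^sup>* `` {x}"

lemma graph_bound:
  assumes fin: "finite S" and po: "partial_order_on S r" and QS: "Q \<subseteq> S \<times> S"
    and xS: "x \<in> S"
    and phiQ: "\<forall>a\<in>blk r Q x. \<forall>b\<in>blk r Q x. (a, b) \<in> Q \<longrightarrow> \<phi> a = \<phi> b"
  shows "card (\<phi> ` blk r Q x) \<le> card S - hasse_components S r + 1"
proof -
  define H where "H = hasse_edges S r"
  define T where "T = blk r Q x"
  define cls where "cls u = H\<^sup>* `` {u}" for u
  have rS: "r \<subseteq> S \<times> S" using po by (auto simp: partial_order_on_def preorder_on_def)
  have HS: "H \<subseteq> S \<times> S" unfolding H_def hasse_edges_def covers_def by auto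
  have symH: "sym H" unfolding H_def hasse_edges_def by (auto intro: symI)
  have symHs: "sym (H\<^sup>*)" using symH by (rule sym_rtrancl)
  have CrS: "Cr r Q \<subseteq> S \<times> S" using rS QS unfolding Cr_def by auto
  have TS: "T \<subseteq> S"
  proof
    fix y assume "y \<in> T"
    then have "(x, y) \<in> (Cr r Q)\<^sup>*" unfolding T_def blk_def by simp
    then show "y \<in> S" using xS CrS by (induction rule: rtrancl_induct) auto
  qed
  have finT: "finite T" using TS fin finite_subset by blast
  have rH: "(a, b) \<in> H\<^sup>*" if "(a, b) \<in> r" for a b
    using r_in_hasse[OF fin po that] H_def by simp
  have HCr: "H \<subseteq> Cr r Q" unfolding H_def hasse_edges_def covers_def Cr_def by auto
  have HCrs: "H\<^sup>* \<subseteq> (Cr r Q)\<^sup>*" using HCr rtrancl_mono by blast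
  have clsT: "cls u \<subseteq> T" if "u \<in> T" for u
    using that HCrs unfolding cls_def T_def blk_def by (auto intro: rtrancl_trans)
  have clsS: "cls u \<subseteq> S" if "u \<in> S" for u
  proof
    fix v assume "v \<in> cls u"
    then have "(u, v) \<in> H\<^sup>*" unfolding cls_def by simp
    then show "v \<in> S" using that HS by (induction rule: rtrancl_induct) auto
  qed
  have cls_self: "u \<in> cls u" for u unfolding cls_def by simp
  have cls_eq: "cls v = cls u" if "v \<in> cls u" for u v
  proof -
    have uv: "(u, v) \<in> H\<^sup>*" using that unfolding cls_def by simp
    then have vu: "(v, u) \<in> H\<^sup>*" using symHs by (meson symD)
    show ?thesis unfolding cls_def using uv vu by (auto intro: rtrancl_trans)
  qed
  have cls_disj: "cls u = cls v" if "w \<in> cls u" "w \<in> cls v" for u v w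
    using cls_eq that by metis
  have grow: "\<And>U. U \<subseteq> T \<Longrightarrow> x \<in> U \<Longrightarrow> (\<forall>u\<in>U. cls u \<subseteq> U) \<Longrightarrow>
      card (\<phi> ` U) + card (cls ` U) \<le> card U + 1 \<Longrightarrow>
      card (\<phi> ` T) + card (cls ` T) \<le> card T + 1"
  proof -
    fix U0 :: "'a set"
    show "U0 \<subseteq> T \<Longrightarrow> x \<in> U0 \<Longrightarrow> (\<forall>u\<in>U0. cls u \<subseteq> U0) \<Longrightarrow>
      card (\<phi> ` U0) + card (cls ` U0) \<le> card U0 + 1 \<Longrightarrow>
      card (\<phi> ` T) + card (cls ` T) \<le> card T + 1"
    proof (induction "card (T - U0)" arbitrary: U0 rule: less_induct)
      case (less U)
      show ?case
      proof (cases "U = T")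
        case True then show ?thesis using less.prems by simp
      next
        case False
        have "\<exists>u y. u \<in> U \<and> y \<notin> U \<and> (u, y) \<in> Cr r Q"
        proof (rule ccontr)
          assume "\<not> ?thesis"
          then have cl: "\<And>u y. u \<in> U \<Longrightarrow> (u, y) \<in> Cr r Q \<Longrightarrow> y \<in> U" by blast
          have "T \<subseteq> U"
          proof
            fix y assume "y \<in> T"
            then have "(x, y) \<in> (Cr r Q)\<^sup>*" unfolding T_def blk_def by simp
            then show "y \<in> U" using less.prems(2) cl by (induction rule: rtrancl_induct) auto
          qed
          then show False using False less.prems(1) by blast
        qed
        then obtain u y where uy: "u \<in> U" "y \<notin> U" "(u, y) \<in> Cr r Q" by blast
        have uT: "u \<in> T" using uy less.prems(1) by blast
        have yT: "y \<in> T"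
          using uT uy(3) unfolding T_def blk_def by (auto intro: rtrancl_into_rtrancl)
        have "(u, y) \<in> Q \<or> (y, u) \<in> Q"
        proof (rule ccontr)
          assume "\<not> ?thesis"
          then have "(u, y) \<in> r \<or> (y, u) \<in> r" using uy(3) unfolding Cr_def by auto
          then have "(u, y) \<in> H\<^sup>*" using rH symHs by (meson symD)
          then have "y \<in> cls u" unfolding cls_def by simp
          then show False using less.prems(3) uy by blast
        qed
        then have phuy: "\<phi> u = \<phi> y" using phiQ uT yT unfolding T_def by metis
        define U' where "U' = U \<union> cls y"
        have U'T: "U' \<subseteq> T" using less.prems(1) clsT yT unfolding U'_def by blast
        have xU': "x \<in> U'" using less.prems(2) unfolding U'_def by blast
        have clU': "\<forall>u\<in>U'. cls u \<subseteq> U'"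
          using less.prems(3) cls_eq unfolding U'_def by blast
        have finU: "finite U" using less.prems(1) finT finite_subset by blast
        have fincy: "finite (cls y)" using clsT[OF yT] finT finite_subset by blast
        have disj: "U \<inter> cls y = {}"
        proof (rule ccontr)
          assume "U \<inter> cls y \<noteq> {}"
          then obtain w where "w \<in> U" "w \<in> cls y" by blast
          then have "y \<in> cls w" using cls_eq cls_self by metis
          then show False using less.prems(3) \<open>w \<in> U\<close> uy(2) by blast
        qed
        have c1: "card U' = card U + card (cls y)"
          unfolding U'_def using card_Un_disjoint[OF finU fincy disj] .
        have "cls ` cls y = {cls y}" using cls_eq cls_self by blast
        then have "cls ` U' = insert (cls y) (cls ` U)" unfolding U'_def using cls_self by auto
        moreover have "cls y \<notin> cls ` U"
        proof
          assume "cls y \<in> cls ` U"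
          then obtain w where "w \<in> U" "cls y = cls w" by blast
          then show False using cls_self less.prems(3) uy(2) by blast
        qed
        ultimately have c2: "card (cls ` U') = card (cls ` U) + 1"
          using finU by simp
        have "\<phi> ` U' = \<phi> ` U \<union> \<phi> ` cls y" unfolding U'_def by auto
        moreover have "\<phi> y \<in> \<phi> ` U \<inter> \<phi> ` cls y" using phuy uy(1) cls_self by (metis IntI image_eqI)
        ultimately have "card (\<phi> ` U') + 1 \<le> card (\<phi> ` U) + card (\<phi> ` cls y)"
        proof -
          assume a: "\<phi> ` U' = \<phi> ` U \<union> \<phi> ` cls y" "\<phi> y \<in> \<phi> ` U \<inter> \<phi> ` cls y"
          have f1: "finite (\<phi> ` U)" "finite (\<phi> ` cls y)" using finU fincy by auto
          have "card (\<phi> ` U \<inter> \<phi> ` cls y) \<ge> 1"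
            using a(2) f1 by (metis One_nat_def Suc_leI card_gt_0_iff empty_iff finite_Int)
          moreover have "card (\<phi> ` U') = card (\<phi> ` U \<union> \<phi> ` cls y)" using a(1) by simp
          ultimately show ?thesis using card_Un_Int[OF f1] by linarith
        qed
        moreover have "card (\<phi> ` cls y) \<le> card (cls y)" using fincy card_image_le by blast
        ultimately have inv': "card (\<phi> ` U') + card (cls ` U') \<le> card U' + 1"
          using c1 c2 less.prems(4) by linarith
        have "T - U' \<subset> T - U" using U'T uy(2) yT cls_self unfolding U'_def by blast
        then have "card (T - U') < card (T - U)"
          using finT by (meson finite_Diff psubset_card_mono)
        then show ?thesis using less.hyps U'T xU' clU' inv' by blast
      qed
    qed
  qed
  have xT: "x \<in> T" unfolding T_def blk_def by simp
  have fincx: "finite (cls x)" using clsT[OF xT] finT finite_subset by blast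
  have "cls ` cls x = {cls x}" using cls_eq cls_self by blast
  then have "card (\<phi> ` cls x) + card (cls ` cls x) \<le> card (cls x) + 1"
    using card_image_le[OF fincx, of \<phi>] by simp
  then have main: "card (\<phi> ` T) + card (cls ` T) \<le> card T + 1"
    using grow[of "cls x"] clsT[OF xT] cls_self cls_eq by blast
  have hc: "hasse_components S r = card (cls ` S)"
    unfolding hasse_components_def quotient_def cls_def H_def by (simp add: UNION_singleton_eq_range)
  have "cls ` S = cls ` T \<union> cls ` (S - T)" using TS by blast
  moreover have "cls ` T \<inter> cls ` (S - T) = {}"
  proof (rule ccontr)
    assume "\<not> ?thesis"
    then obtain u v where "u \<in> T" "v \<in> S - T" "cls u = cls v" by blast
    then show False using clsT cls_self by blast
  qed
  ultimately have "card (cls ` S) = card (cls ` T) + card (cls ` (S - T))"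
    using fin finT by (simp add: card_Un_disjoint)
  moreover have "card (cls ` (S - T)) \<le> card (S - T)" using fin by (simp add: card_image_le)
  moreover have "card (S - T) = card S - card T" using TS fin by (simp add: card_Diff_subset finite_subset)
  moreover have "card T \<le> card S" using TS fin card_mono by blast
  ultimately show ?thesis using main hc unfolding T_def by linarith
qed




definition valid :: "('a \<times> 'a) set \<Rightarrow> ('a \<times> 'a) set \<Rightarrow> ('a \<times> 'a) set \<Rightarrow> 'a set \<Rightarrow> ('a \<Rightarrow> nat) \<Rightarrow> bool" where
  "valid L Q D U \<phi> \<longleftrightarrow> (\<forall>x\<in>U. \<forall>y\<in>U. ((x, y) \<in> L \<longrightarrow> \<phi> x \<le> \<phi> y) \<and>
       ((x, y) \<in> Q \<longrightarrow> \<phi> x = \<phi> y) \<and> ((x, y) \<in> D \<longrightarrow> \<phi> x \<noteq> \<phi> y))"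

definition cnt :: "('a \<times> 'a) set \<Rightarrow> ('a \<times> 'a) set \<Rightarrow> ('a \<times> 'a) set \<Rightarrow> 'a set \<Rightarrow> nat \<Rightarrow> nat" where
  "cnt L Q D U n = card {\<phi> \<in> U \<rightarrow>\<^sub>E {1..n}. valid L Q D U \<phi>}"

lemma valid_inv:
  assumes "\<forall>x\<in>T. \<forall>y\<in>T. \<phi> x \<le> \<phi> y \<longleftrightarrow> \<psi> x \<le> \<psi> y"
  shows "valid L Q D T \<phi> = valid L Q D T \<psi>"
proof -
  have eq: "\<phi> x = \<phi> y \<longleftrightarrow> \<psi> x = \<psi> y" if "x \<in> T" "y \<in> T" for x y
    using assms that by (metis order_antisym order_refl)
  show ?thesis unfolding valid_def using assms eq by blast
qed

lemma cnt_prod: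
  assumes disj: "T \<inter> V = {}"
    and nc: "\<forall>x\<in>T. \<forall>y\<in>V. (x, y) \<notin> L \<and> (y, x) \<notin> L \<and> (x, y) \<notin> Q \<and> (y, x) \<notin> Q"
  shows "cnt L Q {} (T \<union> V) n = cnt L Q {} T n * cnt L Q {} V n"
proof -
  define X where "X = {\<phi> \<in> (T \<union> V) \<rightarrow>\<^sub>E {1..n}. valid L Q {} (T \<union> V) \<phi>}"
  define Y1 where "Y1 = {\<phi> \<in> T \<rightarrow>\<^sub>E {1..n}. valid L Q {} T \<phi>}"
  define Y2 where "Y2 = {\<phi> \<in> V \<rightarrow>\<^sub>E {1..n}. valid L Q {} V \<phi>}"
  have vU: "valid L Q {} (T \<union> V) \<phi> \<longleftrightarrow> valid L Q {} T \<phi> \<and> valid L Q {} V \<phi>" for \<phi>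
    using nc unfolding valid_def by blast
  have vres: "valid L Q {} A (restrict \<phi> A) = valid L Q {} A \<phi>" for A \<phi>
    by (rule valid_inv) simp
  have "bij_betw (\<lambda>\<phi>. (restrict \<phi> T, restrict \<phi> V)) X (Y1 \<times> Y2)"
  proof (rule bij_betw_byWitness[where f'="\<lambda>(a, b). (\<lambda>z. if z \<in> T then a z else b z)"])
    show "\<forall>a\<in>X. (\<lambda>(a, b) z. if z \<in> T then a z else b z) (restrict a T, restrict a V) = a"
      unfolding X_def by (auto simp: fun_eq_iff PiE_def extensional_def)
    show "\<forall>a\<in>Y1 \<times> Y2. (\<lambda>\<phi>. (restrict \<phi> T, restrict \<phi> V)) ((\<lambda>(a, b) z. if z \<in> T then a z else b z) a) = a"
      unfolding Y1_def Y2_def using disj by (fastforce simp: fun_eq_iff PiE_def extensional_def)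
    show "(\<lambda>\<phi>. (restrict \<phi> T, restrict \<phi> V)) ` X \<subseteq> Y1 \<times> Y2"
      unfolding X_def Y1_def Y2_def using vU vres by auto
    show "(\<lambda>(a, b) z. if z \<in> T then a z else b z) ` (Y1 \<times> Y2) \<subseteq> X"
    proof (rule image_subsetI)
      fix p assume "p \<in> Y1 \<times> Y2"
      then obtain a b where p: "p = (a, b)" "a \<in> Y1" "b \<in> Y2" by blast
      define c where "c = (\<lambda>z. if z \<in> T then a z else b z)"
      have 1: "c \<in> (T \<union> V) \<rightarrow>\<^sub>E {1..n}"
        using p disj unfolding c_def Y1_def Y2_def by (fastforce simp: PiE_def extensional_def Pi_def)
      have "valid L Q {} T c = valid L Q {} T a" by (rule valid_inv) (simp add: c_def)
      moreover have "valid L Q {} V c = valid L Q {} V b" by (rule valid_inv) (use disj in \<open>auto simp: c_def\<close>)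
      ultimately have 2: "valid L Q {} (T \<union> V) c" using vU p unfolding Y1_def Y2_def by auto
      show "(\<lambda>(a, b) z. if z \<in> T then a z else b z) p \<in> X"
        using 1 2 unfolding X_def p(1) c_def by simp
    qed
  qed
  then have "card X = card (Y1 \<times> Y2)" by (rule bij_betw_same_card)
  then show ?thesis unfolding cnt_def X_def Y1_def Y2_def by (simp add: card_cartesian_product)
qed

lemma core:
  assumes fin: "finite S" and CrS: "Cr r Q \<subseteq> S \<times> S"
    and bnd: "\<And>x \<phi>. x \<in> S \<Longrightarrow> valid r Q {} (blk r Q x) \<phi> \<Longrightarrow> card (\<phi> ` blk r Q x) \<le> B"
  shows "U \<subseteq> S \<Longrightarrow> (\<forall>a b. (a, b) \<in> Cr r Q \<longrightarrow> a \<in> U \<longrightarrow> b \<in> U) \<Longrightarrow>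
    \<exists>f. goodp B f \<and> (\<forall>n. poly f (of_nat n) = of_nat (cnt r Q {} U n))"
proof (induction "card U" arbitrary: U rule: less_induct)
  case (less U)
  have symC: "(a, b) \<in> Cr r Q \<longleftrightarrow> (b, a) \<in> Cr r Q" for a b unfolding Cr_def by auto
  show ?case
  proof (cases "U = {}")
    case True
    have "cnt r Q {} U n = 1" for n unfolding cnt_def True by (simp add: valid_def)
    moreover have "goodp B 1" using goodp_const[OF good_int[of B 1]] by (simp add: one_pCons)
    ultimately show ?thesis by (intro exI[of _ 1]) simp
  next
    case False
    then obtain x where xU: "x \<in> U" by blast
    define T where "T = blk r Q x"
    have TU: "T \<subseteq> U"
    proof
      fix y assume "y \<in> T"
      then have "(x, y) \<in> (Cr r Q)\<^sup>*" unfolding T_def blk_def by simp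
      then show "y \<in> U" using xU less.prems(2) by (induction rule: rtrancl_induct) auto
    qed
    have finU: "finite U" using less.prems(1) fin finite_subset by blast
    have finT: "finite T" using TU finU finite_subset by blast
    have Tcl: "b \<in> T" if "a \<in> T" "(a, b) \<in> Cr r Q" for a b
      using that unfolding T_def blk_def by (auto intro: rtrancl_into_rtrancl)
    have nc: "\<forall>a\<in>T. \<forall>b\<in>U - T. (a, b) \<notin> r \<and> (b, a) \<notin> r \<and> (a, b) \<notin> Q \<and> (b, a) \<notin> Q"
      using Tcl unfolding Cr_def by blast
    have UT: "T \<union> (U - T) = U" using TU by blast
    have cntsplit: "cnt r Q {} U n = cnt r Q {} T n * cnt r Q {} (U - T) n" for n
      using cnt_prod[of T "U - T" r Q n] nc UT by auto
    have "\<exists>f. goodp B f \<and> (\<forall>n. poly f (of_nat n) = of_nat (card {\<phi> \<in> T \<rightarrow>\<^sub>E {1..n}. valid r Q {} T \<phi>}))"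
    proof (rule block_poly[OF finT])
      show "\<And>\<phi> \<psi>. \<forall>x\<in>T. \<forall>y\<in>T. (\<phi> x \<le> \<phi> y) = (\<psi> x \<le> \<psi> y) \<Longrightarrow> valid r Q {} T \<phi> = valid r Q {} T \<psi>"
        by (rule valid_inv)
      show "\<And>\<phi>. valid r Q {} T \<phi> \<Longrightarrow> card (\<phi> ` T) \<le> B"
        using bnd xU less.prems(1) unfolding T_def by blast
    qed
    then obtain f1 where f1: "goodp B f1" "\<And>n. poly f1 (of_nat n) = of_nat (cnt r Q {} T n)"
      unfolding cnt_def by blast
    have "card (U - T) < card U"
      using finU xU by (metis Diff_iff T_def blk_def psubsetI Diff_subset ImageI rtrancl.rtrancl_refl singletonI psubset_card_mono)
    moreover have "U - T \<subseteq> S" using less.prems(1) by blast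
    moreover have "\<forall>a b. (a, b) \<in> Cr r Q \<longrightarrow> a \<in> U - T \<longrightarrow> b \<in> U - T"
      using less.prems(2) Tcl symC by blast
    ultimately obtain f2 where f2: "goodp B f2" "\<And>n. poly f2 (of_nat n) = of_nat (cnt r Q {} (U - T) n)"
      using less.hyps by blast
    show ?thesis
      by (intro exI[of _ "f1 * f2"]) (simp add: goodp_mult f1 f2 cntsplit)
  qed
qed




lemma cnt_del:
  assumes "a \<in> S" "b \<in> S" "finite S"
  shows "cnt L Q D S n = cnt L Q (insert (a, b) D) S n + cnt L (insert (a, b) Q) D S n"
proof -
  define X where "X = {\<phi> \<in> S \<rightarrow>\<^sub>E {1..n}. valid L Q D S \<phi>}"
  have v1: "valid L Q (insert (a, b) D) S \<phi> \<longleftrightarrow> valid L Q D S \<phi> \<and> \<phi> a \<noteq> \<phi> b" for \<phi>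
    unfolding valid_def using assms(1,2) by blast
  have v2: "valid L (insert (a, b) Q) D S \<phi> \<longleftrightarrow> valid L Q D S \<phi> \<and> \<phi> a = \<phi> b" for \<phi>
    unfolding valid_def using assms(1,2) by blast
  have e1: "{\<phi> \<in> S \<rightarrow>\<^sub>E {1..n}. valid L Q (insert (a, b) D) S \<phi>} = {\<phi>\<in>X. \<phi> a \<noteq> \<phi> b}"
    unfolding X_def v1 by blast
  have e2: "{\<phi> \<in> S \<rightarrow>\<^sub>E {1..n}. valid L (insert (a, b) Q) D S \<phi>} = {\<phi>\<in>X. \<phi> a = \<phi> b}"
    unfolding X_def v2 by blast
  have finX: "finite X" unfolding X_def by (rule finite_subset[of _ "S \<rightarrow>\<^sub>E {1..n::nat}"]) (auto intro: finite_PiE assms(3))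
  have un: "X = {\<phi>\<in>X. \<phi> a \<noteq> \<phi> b} \<union> {\<phi>\<in>X. \<phi> a = \<phi> b}" by blast
  have "card X = card {\<phi>\<in>X. \<phi> a \<noteq> \<phi> b} + card {\<phi>\<in>X. \<phi> a = \<phi> b}"
    using card_Un_disjoint[of "{\<phi>\<in>X. \<phi> a \<noteq> \<phi> b}" "{\<phi>\<in>X. \<phi> a = \<phi> b}"] finX un by auto
  then show ?thesis unfolding cnt_def e1 e2 X_def by simp
qed

lemma main_ind:
  assumes fin: "finite S" and po: "partial_order_on S r"
    and finD: "finite D" and DS: "D \<subseteq> S \<times> S"
  shows "Q \<subseteq> S \<times> S \<Longrightarrow> \<exists>f. goodp (card S - hasse_components S r + 1) f \<and>
      (\<forall>n. poly f (of_nat n) = of_nat (cnt r Q D S n))"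
  using finD DS
proof (induction D arbitrary: Q rule: finite_induct)
  case empty
  have rS: "r \<subseteq> S \<times> S" using po by (auto simp: partial_order_on_def preorder_on_def)
  have CrS: "Cr r Q \<subseteq> S \<times> S" using rS empty.prems unfolding Cr_def by auto
  show ?case
  proof (rule core[OF fin CrS])
    fix x \<phi> assume "x \<in> S" "valid r Q {} (blk r Q x) \<phi>"
    then show "card (\<phi> ` blk r Q x) \<le> card S - hasse_components S r + 1"
      by (intro graph_bound[OF fin po empty.prems(1)]) (auto simp: valid_def)
  qed (use CrS in auto)
next
  case (insert e D)
  obtain a b where e: "e = (a, b)" by (cases e)
  have ab: "a \<in> S" "b \<in> S" using insert.prems e by auto
  obtain f1 where f1: "goodp (card S - hasse_components S r + 1) f1"
    "\<And>n. poly f1 (of_nat n) = of_nat (cnt r Q D S n)"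
    using insert.IH[of Q] insert.prems by auto
  obtain f2 where f2: "goodp (card S - hasse_components S r + 1) f2"
    "\<And>n. poly f2 (of_nat n) = of_nat (cnt r (insert (a, b) Q) D S n)"
    using insert.IH[of "insert (a, b) Q"] insert.prems ab by auto
  show ?case
  proof (intro exI[of _ "f1 - f2"] conjI allI)
    show "goodp (card S - hasse_components S r + 1) (f1 - f2)" by (rule goodp_diff[OF f1(1) f2(1)])
    fix n
    show "poly (f1 - f2) (of_nat n) = of_nat (cnt r Q (insert e D) S n)"
      using cnt_del[OF ab fin, of r Q D n] f1(2)[of n] f2(2)[of n] unfolding e by simp
  qed
qed

theorem theorem1p1:
  fixes S :: "'a set" and r :: "('a \<times> 'a) set" and E :: "'a set set"
  assumes "finite S"
    and "r \<subseteq> S \<times> S"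
    and "partial_order_on S r"
    and "\<forall>e\<in>E. \<exists>x y. x \<in> S \<and> y \<in> S \<and> x \<noteq> y \<and> e = {x, y}"
  shows "\<exists>f :: rat poly.
    (\<forall>n::nat. poly f (of_nat n) = of_nat (colorings S r E n)) \<and>
    (\<forall>i. \<forall>p::nat. prime p \<and> int p dvd snd (quotient_of (coeff f i))
        \<longrightarrow> p \<le> card S - hasse_components S r + 1)"
proof -
  define D0 where "D0 = {(x, y). {x, y} \<in> E}"
  have D0S: "D0 \<subseteq> S \<times> S"
  proof
    fix p assume "p \<in> D0"
    then obtain x y where p: "p = (x, y)" "{x, y} \<in> E" unfolding D0_def by blast
    then obtain u v where "u \<in> S" "v \<in> S" "{x, y} = {u, v}" using assms(4) by blast
    then show "p \<in> S \<times> S" using p by (auto simp: doubleton_eq_iff)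
  qed
  have finD: "finite D0" using D0S assms(1) finite_subset by blast
  have col: "colorings S r E n = cnt r {} D0 S n" for n
  proof -
    have "{\<phi> \<in> S \<rightarrow>\<^sub>E {1..n}.
      (\<forall>x\<in>S. \<forall>y\<in>S. (x, y) \<in> r \<longrightarrow> \<phi> x \<le> \<phi> y) \<and>
      (\<forall>x y. {x, y} \<in> E \<longrightarrow> \<phi> x \<noteq> \<phi> y)} = {\<phi> \<in> S \<rightarrow>\<^sub>E {1..n}. valid r {} D0 S \<phi>}"
    proof (rule Collect_cong, rule conj_cong[OF refl])
      fix \<phi> :: "'a \<Rightarrow> nat"
      show "((\<forall>x\<in>S. \<forall>y\<in>S. (x, y) \<in> r \<longrightarrow> \<phi> x \<le> \<phi> y) \<and>
      (\<forall>x y. {x, y} \<in> E \<longrightarrow> \<phi> x \<noteq> \<phi> y)) = valid r {} D0 S \<phi>"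
        using D0S unfolding valid_def D0_def by blast
    qed
    then show ?thesis unfolding colorings_def cnt_def by simp
  qed
  obtain f where f: "goodp (card S - hasse_components S r + 1) f"
    "\<And>n. poly f (of_nat n) = of_nat (cnt r {} D0 S n)"
    using main_ind[OF assms(1) assms(3) finD D0S, of "{}"] by auto
  show ?thesis
  proof (intro exI[of _ f] conjI allI impI)
    show "poly f (of_nat n) = of_nat (colorings S r E n)" for n using f(2) col by simp
    fix i p assume "prime p \<and> int p dvd snd (quotient_of (coeff f i))"
    then show "p \<le> card S - hasse_components S r + 1"
      using good_denom f(1) unfolding goodp_def by blast
  qed
qed


end
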